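(* In the setting of the context, assume $\mathbf{A}$ and $\tilde{\mathbf{A}}$ are invertible, $\mathbf{Q}_\Delta$ is given by the LU trick, and the number $M$ of quadrature nodes satisfies $M\le M^*$, where $M^*$ (depending on the matrix norm) is such that the modified smoother $\mathbf{T}_2=\mathbf{I}_{LMN}-\hat{\mathbf{P}}_2^{-1}\mathbf{C}$ satisfies the smoothing property $\|\mathbf{C}\mathbf{T}_2^k\|\le c\sqrt{8/(k\pi)}\,\mu$ for all $k$ and all sufficiently large $\mu$. Let $\mathbf{T}_{\mathrm{PFASST}}(\mu,k)=\big(\mathbf{I}_{LMN}-\mathbf{T}_C^F\tilde{\mathbf{P}}^{-1}\mathbf{T}_F^C\mathbf{C}\big)\big(\mathbf{I}_{LMN}-\hat{\mathbf{P}}_2^{-1}\mathbf{C}\big)^k$ be the iteration matrix of PFASST with $k$ modified approximative block Jacobi pre-smoothing steps. Then there exist $c>0$ and $\mu^*>0$ such that for all $k\in\mathbb{N}$ and all $\mu\ge\mu^*$, $$\big\|\mathbf{T}_{\mathrm{PFASST}}(\mu,k)\big\|\le g(k),\qquad g(k)=c\,k^{-1/2}\to0\ (k\to\infty),$$ independently of $\mu$.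
   Context: Fix positive integers $L,M,N$ and coarse sizes $\tilde M\le M$, $\tilde N\le N$. $\mathbf{Q}=(q_{m,j})\in\mathbb{R}^{M\times M}$ with $q_{m,j}=\int_0^{\tau_m}\ell_j(s)\,ds$ is the collocation matrix for the (right) Gauss–Radau nodes $0<\tau_1<\dots<\tau_M=1$ on $[0,1]$. LU trick: $\mathbf{Q}^T=\mathbf{L}_Q\mathbf{U}_Q$ with $\mathbf{L}_Q$ unit lower triangular, $\mathbf{U}_Q$ upper triangular, $\mathbf{Q}_\Delta=\mathbf{U}_Q^T$. $\tilde{\mathbf{Q}}_\Delta\in\mathbb{R}^{\tilde M\times\tilde M}$ is the lower-triangular weight matrix of a simpler quadrature rule on the coarse nodes, assumed invertible (standing assumption of the stiff-limit analysis). $\mathbf{A}\in\mathbb{C}^{N\times N}$, $\tilde{\mathbf{A}}\in\mathbb{C}^{\tilde N\times\tilde N}$, $\mu>0$. $\mathbf{N}_M$, $\tilde{\mathbf{N}}_{\tilde M}$ are the $M\times M$, $\tilde M\times\tilde M$ matrices with ones in the last column and zeros elsewhere; $\mathbf{H}=\mathbf{N}_M\otimes\mathbf{I}_N$, $\tilde{\mathbf{H}}=\tilde{\mathbf{N}}_{\tilde M}\otimes\mathbf{I}_{\tilde N}$; $\mathbf{E}\in\mathbb{R}^{L\times L}$ has ones on the first subdiagonal and zeros elsewhere. $\mathbf{C}=\mathbf{I}_{LMN}-\mu\,\mathbf{I}_L\otimes\mathbf{Q}\otimes\mathbf{A}-\mathbf{E}\otimes\mathbf{H}$, modified fine preconditioner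 $\hat{\mathbf{P}}_2=\mathbf{I}_{LMN}-\mu\,\mathbf{I}_L\otimes2\mathbf{Q}_\Delta\otimes\mathbf{A}$, coarse preconditioner $\tilde{\mathbf{P}}=\mathbf{I}_{L\tilde M\tilde N}-\mu\,\mathbf{I}_L\otimes\tilde{\mathbf{Q}}_\Delta\otimes\tilde{\mathbf{A}}-\mathbf{E}\otimes\tilde{\mathbf{H}}$ (both invertible). $\mathbf{T}_F^C=\mathbf{I}_L\otimes\mathbf{T}_{F,Q}^C\otimes\mathbf{T}_{F,A}^C\in\mathbb{R}^{L\tilde M\tilde N\times LMN}$, $\mathbf{T}_C^F=\mathbf{I}_L\otimes\mathbf{T}_{C,Q}^F\otimes\mathbf{T}_{C,A}^F\in\mathbb{R}^{LMN\times L\tilde M\tilde N}$, with $(\mathbf{E}\otimes\tilde{\mathbf{H}})\mathbf{T}_F^C=\mathbf{T}_F^C(\mathbf{E}\otimes\mathbf{H})$. $\|\cdot\|$ is an induced matrix norm. *)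

theory Defs
  imports "HOL-Analysis.Analysis" "Jordan_Normal_Form.Matrix" "Jordan_Normal_Form.Gauss_Jordan_Elimination"
    "HOL-Computational_Algebra.Polynomial"
begin

text \<open>Kronecker product (row-major block convention: (A kron B) has blocks A(i,j) B).\<close>
definition kron :: "'a::times mat \<Rightarrow> 'a mat \<Rightarrow> 'a mat" where
  "kron A B = mat (dim_row A * dim_row B) (dim_col A * dim_col B)
     (\<lambda>(i,j). A $$ (i div dim_row B, j div dim_col B) * B $$ (i mod dim_row B, j mod dim_col B))"

definition minv :: "'a::field mat \<Rightarrow> 'a mat" where
  "minv A = the (mat_inverse A)"

definition cmat :: "real mat \<Rightarrow> complex mat" where
  "cmat A = map_mat complex_of_real A"

definition lower_triangular :: "'a::zero mat \<Rightarrow> bool" where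
  "lower_triangular A \<longleftrightarrow> (\<forall>i<dim_row A. \<forall>j<dim_col A. i < j \<longrightarrow> A $$ (i,j) = 0)"

definition unit_lower_triangular :: "'a::{zero,one} mat \<Rightarrow> bool" where
  "unit_lower_triangular A \<longleftrightarrow> lower_triangular A \<and> (\<forall>i<dim_row A. A $$ (i,i) = 1)"

definition shiftE :: "nat \<Rightarrow> 'a::{zero,one} mat" where
  "shiftE L = mat L L (\<lambda>(i,j). if i = Suc j then 1 else 0)"

definition lastcolN :: "nat \<Rightarrow> 'a::{zero,one} mat" where
  "lastcolN M = mat M M (\<lambda>(i,j). if j = M - 1 then 1 else 0)"

definition Hmat :: "nat \<Rightarrow> nat \<Rightarrow> complex mat" where
  "Hmat M N = kron (lastcolN M) (1\<^sub>m N)"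

text \<open>Nodes indexed 0..M-1 (tau_1..tau_M in the paper).\<close>
definition lagrange_basis :: "nat \<Rightarrow> (nat \<Rightarrow> real) \<Rightarrow> nat \<Rightarrow> real \<Rightarrow> real" where
  "lagrange_basis M \<tau> j s = (\<Prod>i\<in>{..<M} - {j}. (s - \<tau> i) / (\<tau> j - \<tau> i))"

definition radau_right_nodes :: "nat \<Rightarrow> (nat \<Rightarrow> real) \<Rightarrow> bool" where
  "radau_right_nodes M \<tau> \<longleftrightarrow>
     (\<forall>i j. i < j \<and> j < M \<longrightarrow> \<tau> i < \<tau> j) \<and> 0 < \<tau> 0 \<and> \<tau> (M - 1) = 1 \<and>
     (\<forall>p :: real poly. degree p \<le> 2 * M - 2 \<longrightarrow>
        (\<Sum>j<M. integral {0..1} (lagrange_basis M \<tau> j) * poly p (\<tau> j)) = integral {0..1} (poly p))"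

definition collocQ :: "nat \<Rightarrow> (nat \<Rightarrow> real) \<Rightarrow> real mat" where
  "collocQ M \<tau> = mat M M (\<lambda>(m,j). integral {0..\<tau> m} (lagrange_basis M \<tau> j))"

definition is_vec_norm :: "nat \<Rightarrow> (complex vec \<Rightarrow> real) \<Rightarrow> bool" where
  "is_vec_norm n nv \<longleftrightarrow>
     (\<forall>v\<in>carrier_vec n. 0 \<le> nv v \<and> (nv v = 0 \<longleftrightarrow> v = 0\<^sub>v n)) \<and>
     (\<forall>a. \<forall>v\<in>carrier_vec n. nv (a \<cdot>\<^sub>v v) = cmod a * nv v) \<and>
     (\<forall>u\<in>carrier_vec n. \<forall>v\<in>carrier_vec n. nv (u + v) \<le> nv u + nv v)"

definition induced_norm :: "(complex vec \<Rightarrow> real) \<Rightarrow> nat \<Rightarrow> complex mat \<Rightarrow> real" where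
  "induced_norm nv n B = Sup {nv (B *\<^sub>v v) / nv v | v. v \<in> carrier_vec n \<and> v \<noteq> 0\<^sub>v n}"

definition Cmat :: "nat \<Rightarrow> nat \<Rightarrow> nat \<Rightarrow> real mat \<Rightarrow> complex mat \<Rightarrow> real \<Rightarrow> complex mat" where
  "Cmat L M N Q A \<mu> = 1\<^sub>m (L*M*N) - complex_of_real \<mu> \<cdot>\<^sub>m kron (1\<^sub>m L) (kron (cmat Q) A)
                        - kron (shiftE L) (Hmat M N)"

definition P2hat :: "nat \<Rightarrow> nat \<Rightarrow> nat \<Rightarrow> real mat \<Rightarrow> complex mat \<Rightarrow> real \<Rightarrow> complex mat" where
  "P2hat L M N QD A \<mu> = 1\<^sub>m (L*M*N) - complex_of_real \<mu> \<cdot>\<^sub>m kron (1\<^sub>m L) (kron (cmat (2 \<cdot>\<^sub>m QD)) A)"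

definition Ptilde :: "nat \<Rightarrow> nat \<Rightarrow> nat \<Rightarrow> real mat \<Rightarrow> complex mat \<Rightarrow> real \<Rightarrow> complex mat" where
  "Ptilde L Mt Nt QDt At \<mu> = 1\<^sub>m (L*Mt*Nt) - complex_of_real \<mu> \<cdot>\<^sub>m kron (1\<^sub>m L) (kron (cmat QDt) At)
                        - kron (shiftE L) (Hmat Mt Nt)"

definition T2mat :: "nat \<Rightarrow> nat \<Rightarrow> nat \<Rightarrow> real mat \<Rightarrow> real mat \<Rightarrow> complex mat \<Rightarrow> real \<Rightarrow> complex mat" where
  "T2mat L M N Q QD A \<mu> = 1\<^sub>m (L*M*N) - minv (P2hat L M N QD A \<mu>) * Cmat L M N Q A \<mu>"

definition Tpfasst :: "nat \<Rightarrow> nat \<Rightarrow> nat \<Rightarrow> nat \<Rightarrow> nat \<Rightarrow> real mat \<Rightarrow> real mat \<Rightarrow> real mat \<Rightarrow>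
    complex mat \<Rightarrow> complex mat \<Rightarrow> complex mat \<Rightarrow> complex mat \<Rightarrow> real \<Rightarrow> nat \<Rightarrow> complex mat" where
  "Tpfasst L M N Mt Nt Q QD QDt A At TCF TFC \<mu> k =
     (1\<^sub>m (L*M*N) - TCF * minv (Ptilde L Mt Nt QDt At \<mu>) * TFC * Cmat L M N Q A \<mu>)
     * (T2mat L M N Q QD A \<mu>) ^\<^sub>m k"

end

theory Submission
  imports Defs "Jordan_Normal_Form.Determinant"
begin

lemma kron_dims[simp]: "dim_row (kron A B) = dim_row A * dim_row B" "dim_col (kron A B) = dim_col A * dim_col B"
  by (auto simp: kron_def)

lemma kron_carrier: "A \<in> carrier_mat a b \<Longrightarrow> B \<in> carrier_mat p q \<Longrightarrow> kron A B \<in> carrier_mat (a*p) (b*q)"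
  by auto

lemma kron_index: "i < dim_row A * dim_row B \<Longrightarrow> j < dim_col A * dim_col B \<Longrightarrow>
  kron A B $$ (i,j) = A $$ (i div dim_row B, j div dim_col B) * B $$ (i mod dim_row B, j mod dim_col B)"
  by (simp add: kron_def)

lemma sum_div_mod_nat:
  fixes f :: "nat \<Rightarrow> 'a::comm_monoid_add"
  shows "(\<Sum>k<b*q. f k) = (\<Sum>k1<b. \<Sum>k2<q. f (k1*q+k2))"
proof (induction b)
  case 0 then show ?case by simp
next
  case (Suc b)
  have "(\<Sum>k<Suc b*q. f k) = (\<Sum>k<b*q. f k) + (\<Sum>k2<q. f (b*q+k2))"
  proof -
    have "{..<Suc b * q} = {..<b*q} \<union> {b*q..<b*q+q}" by auto
    moreover have "(\<Sum>k\<in>{b*q..<b*q+q}. f k) = (\<Sum>k2<q. f (b*q+k2))"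
    proof -
      have "sum f {0+b*q..<q+b*q} = (\<Sum>k2=0..<q. f(k2+b*q))" by (rule sum.shift_bounds_nat_ivl)
      then show ?thesis by (simp add: lessThan_atLeast0 add.commute)
    qed
    ultimately show ?thesis by (simp add: sum.union_disjoint ivl_disj_int)
  qed
  then show ?case using Suc by simp
qed

lemma kron_mult:
  fixes A B C D :: "'a::comm_ring_1 mat"
  assumes A: "A \<in> carrier_mat a b" and B: "B \<in> carrier_mat p q"
    and C: "C \<in> carrier_mat b c" and D: "D \<in> carrier_mat q d"
  shows "kron A B * kron C D = kron (A*C) (B*D)"
proof (rule eq_matI)
  show "dim_row (kron A B * kron C D) = dim_row (kron (A * C) (B * D))" using A B C D by simp
  show "dim_col (kron A B * kron C D) = dim_col (kron (A * C) (B * D))" using A B C D by simp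
  fix i j assume i: "i < dim_row (kron (A * C) (B * D))" and j: "j < dim_col (kron (A * C) (B * D))"
  have dims: "dim_row A = a" "dim_col A = b" "dim_row B = p" "dim_col B = q" "dim_row C = b" "dim_col C = c" "dim_row D = q" "dim_col D = d"
    using A B C D by auto
  have ip: "i < a*p" and js: "j < c*d" using i j dims by auto
  then have p0: "p > 0" and d0: "d > 0" by (auto intro!: Nat.gr0I)
  have idiv: "i div p < a" using ip by (simp add: less_mult_imp_div_less)
  have imod: "i mod p < p" using p0 by simp
  have jdiv: "j div d < c" using js by (simp add: less_mult_imp_div_less)
  have jmod: "j mod d < d" using d0 by simp
  have "(kron A B * kron C D) $$ (i,j) = (\<Sum>k<b*q. kron A B $$ (i,k) * kron C D $$ (k,j))"
    using ip js by (simp add: dims scalar_prod_def lessThan_atLeast0)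
  also have "\<dots> = (\<Sum>k1<b. \<Sum>k2<q. kron A B $$ (i,k1*q+k2) * kron C D $$ (k1*q+k2,j))"
    by (rule sum_div_mod_nat)
  also have "\<dots> = (\<Sum>k1<b. \<Sum>k2<q. (A $$ (i div p, k1) * C $$ (k1, j div d)) * (B $$ (i mod p, k2) * D $$ (k2, j mod d)))"
  proof (intro sum.cong refl)
    fix k1 k2 assume k1: "k1 \<in> {..<b}" and k2: "k2 \<in> {..<q}"
    have q0: "q > 0" using k2 by auto
    have "k1*q+k2 < (k1+1)*q" using k2 by simp
    also have "\<dots> \<le> b*q" using k1 by (intro mult_right_mono) auto
    finally have lt: "k1*q+k2 < b*q" .
    have dq: "(k1*q+k2) div q = k1" and mq: "(k1*q+k2) mod q = k2" using k2 q0 by auto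
    show "kron A B $$ (i,k1*q+k2) * kron C D $$ (k1*q+k2,j) = (A $$ (i div p, k1) * C $$ (k1, j div d)) * (B $$ (i mod p, k2) * D $$ (k2, j mod d))"
      using ip js lt k2 by (simp add: dims kron_index dq mq mult_ac)
  qed
  also have "\<dots> = (\<Sum>k1<b. A $$ (i div p, k1) * C $$ (k1, j div d)) * (\<Sum>k2<q. B $$ (i mod p, k2) * D $$ (k2, j mod d))"
    by (rule sum_product[symmetric])
  also have "\<dots> = kron (A*C) (B*D) $$ (i,j)"
    using ip js idiv imod jdiv jmod
    by (simp add: dims kron_index scalar_prod_def lessThan_atLeast0)
  finally show "(kron A B * kron C D) $$ (i,j) = kron (A*C) (B*D) $$ (i,j)" .
qed

lemma kron_one: "kron (1\<^sub>m a) (1\<^sub>m b :: 'a::{comm_ring_1} mat) = 1\<^sub>m (a*b)"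
proof (rule eq_matI)
  fix i j assume i: "i < dim_row (1\<^sub>m (a*b) :: 'a mat)" and j: "j < dim_col (1\<^sub>m (a*b) :: 'a mat)"
  then have "i < a*b" "j < a*b" by auto
  then have b0: "b > 0" by (auto intro!: Nat.gr0I)
  have "(i div b = j div b \<and> i mod b = j mod b) = (i = j)"
    by (metis div_mult_mod_eq)
  moreover have "i div b < a" "j div b < a" using \<open>i < a*b\<close> \<open>j < a*b\<close> by (auto simp: less_mult_imp_div_less)
  ultimately show "kron (1\<^sub>m a) (1\<^sub>m b) $$ (i,j) = (1\<^sub>m (a*b) :: 'a mat) $$ (i,j)"
    using \<open>i < a*b\<close> \<open>j < a*b\<close> b0 by (auto simp: kron_index)
qed auto

lemma cmat_carrier[simp]: "cmat A \<in> carrier_mat (dim_row A) (dim_col A)" "dim_row (cmat A) = dim_row A" "dim_col (cmat A) = dim_col A"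
  by (auto simp: cmat_def)

lemma cmat_mult: assumes "A \<in> carrier_mat a b" "B \<in> carrier_mat b c"
  shows "cmat (A*B) = cmat A * cmat B"
  using assms by (intro eq_matI) (auto simp: cmat_def scalar_prod_def)

lemma cmat_one: "cmat (1\<^sub>m n) = 1\<^sub>m n"
  by (intro eq_matI) (auto simp: cmat_def)

definition vn :: "complex vec \<Rightarrow> real" where "vn v = (\<Sum>i<dim_vec v. cmod (v$i))"
definition mabs :: "complex mat \<Rightarrow> real" where
  "mabs A = (\<Sum>i<dim_row A. \<Sum>j<dim_col A. cmod (A$$(i,j)))"

lemma vn_nonneg: "0 \<le> vn v" by (simp add: vn_def sum_nonneg)
lemma mabs_nonneg: "0 \<le> mabs A" by (simp add: mabs_def sum_nonneg)

lemma vn_comp: "i < dim_vec v \<Longrightarrow> cmod (v$i) \<le> vn v"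
  unfolding vn_def by (rule member_le_sum) auto

lemma vn_mult: assumes A: "A \<in> carrier_mat nr nc" and v: "v \<in> carrier_vec nc"
  shows "vn (A *\<^sub>v v) \<le> mabs A * vn v"
proof -
  have "vn (A *\<^sub>v v) = (\<Sum>i<nr. cmod (\<Sum>j<nc. A$$(i,j) * v$j))"
    using A v by (simp add: vn_def scalar_prod_def lessThan_atLeast0)
  also have "\<dots> \<le> (\<Sum>i<nr. \<Sum>j<nc. cmod (A$$(i,j)) * vn v)"
  proof (intro sum_mono)
    fix i assume "i \<in> {..<nr}"
    have "cmod (\<Sum>j<nc. A$$(i,j) * v$j) \<le> (\<Sum>j<nc. cmod (A$$(i,j) * v$j))" by (rule norm_sum)
    also have "\<dots> \<le> (\<Sum>j<nc. cmod (A$$(i,j)) * vn v)"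
      using v by (intro sum_mono) (auto simp: norm_mult intro!: mult_left_mono vn_comp)
    finally show "cmod (\<Sum>j<nc. A$$(i,j) * v$j) \<le> (\<Sum>j<nc. cmod (A$$(i,j)) * vn v)" .
  qed
  also have "\<dots> = mabs A * vn v" using A by (simp add: mabs_def sum_distrib_right)
  finally show ?thesis .
qed

lemma vn_add: "dim_vec u = dim_vec v \<Longrightarrow> vn (u + v) \<le> vn u + vn v"
  unfolding vn_def by (simp add: sum.distrib[symmetric] norm_triangle_ineq sum_mono)

lemma vn_minus: "dim_vec u = dim_vec v \<Longrightarrow> vn (u - v) \<le> vn u + vn v"
  unfolding vn_def by (simp add: sum.distrib[symmetric] norm_triangle_ineq4 sum_mono)

lemma vn_smult: "vn (a \<cdot>\<^sub>v v) = cmod a * vn v"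
  unfolding vn_def by (simp add: norm_mult sum_distrib_left)

lemma vn_pos: assumes "v \<noteq> 0\<^sub>v (dim_vec v)" shows "0 < vn v"
proof -
  obtain i where i: "i < dim_vec v" "v$i \<noteq> 0" using assms by (metis eq_vecI index_zero_vec(1,2))
  then have "0 < cmod (v$i)" by simp
  also have "\<dots> \<le> vn v" using i(1) by (rule vn_comp)
  finally show ?thesis .
qed

lemma minv_inj:
  fixes A :: "complex mat"
  assumes A: "A \<in> carrier_mat n n" and inj: "\<And>v. v \<in> carrier_vec n \<Longrightarrow> A *\<^sub>v v = 0\<^sub>v n \<Longrightarrow> v = 0\<^sub>v n"
  shows "minv A \<in> carrier_mat n n \<and> A * minv A = 1\<^sub>m n \<and> minv A * A = 1\<^sub>m n"
proof -
  have "Determinant.det A \<noteq> 0" using det_0_iff_vec_prod_zero_field[OF A] inj by blast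
  from det_non_zero_imp_unit[OF A this, of "()"] have U: "A \<in> Units (ring_mat TYPE(complex) n ())" .
  have "mat_inverse A \<noteq> None" using mat_inverse(1)[OF A, of "()"] U by blast
  then obtain B where B: "mat_inverse A = Some B" by auto
  then have "minv A = B" by (simp add: minv_def)
  then show ?thesis using mat_inverse(2)[OF A B] by simp
qed

lemma nvD:
  assumes "is_vec_norm n nv"
  shows "\<And>v. v \<in> carrier_vec n \<Longrightarrow> 0 \<le> nv v"
    and "\<And>v. v \<in> carrier_vec n \<Longrightarrow> nv v = 0 \<longleftrightarrow> v = 0\<^sub>v n"
    and "\<And>a v. v \<in> carrier_vec n \<Longrightarrow> nv (a \<cdot>\<^sub>v v) = cmod a * nv v"
    and "\<And>u v. u \<in> carrier_vec n \<Longrightarrow> v \<in> carrier_vec n \<Longrightarrow> nv (u + v) \<le> nv u + nv v"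
  using assms unfolding is_vec_norm_def by blast+

lemma nv_upper:
  assumes nv: "is_vec_norm n nv"
  shows "\<exists>a>0. \<forall>v\<in>carrier_vec n. nv v \<le> a * vn v"
proof -
  define s where "s = (\<Sum>i<n. nv (unit_vec n i))"
  have s0: "0 \<le> s" unfolding s_def by (intro sum_nonneg nvD(1)[OF nv]) auto
  have main: "\<forall>v\<in>carrier_vec n. nv v \<le> (s+1) * vn v"
  proof
    fix v :: "complex vec" assume v: "v \<in> carrier_vec n"
    have ind: "m \<le> n \<Longrightarrow> nv (vec n (\<lambda>i. if i<m then v$i else 0)) \<le> (\<Sum>i<m. cmod (v$i) * nv (unit_vec n i))" for m
    proof (induction m)
      case 0
      have "vec n (\<lambda>i. if i<0 then v$i else 0) = 0\<^sub>v n" by (intro eq_vecI) auto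
      then show ?case using nvD(2)[OF nv, of "0\<^sub>v n"] by simp
    next
      case (Suc m)
      have eq: "vec n (\<lambda>i. if i<Suc m then v$i else 0) = vec n (\<lambda>i. if i<m then v$i else 0) + v$m \<cdot>\<^sub>v unit_vec n m"
        using Suc.prems by (intro eq_vecI) (auto simp: unit_vec_def less_Suc_eq)
      have "nv (vec n (\<lambda>i. if i<Suc m then v$i else 0)) \<le> nv (vec n (\<lambda>i. if i<m then v$i else 0)) + nv (v$m \<cdot>\<^sub>v unit_vec n m)"
        unfolding eq by (intro nvD(4)[OF nv]) auto
      also have "\<dots> = nv (vec n (\<lambda>i. if i<m then v$i else 0)) + cmod (v$m) * nv (unit_vec n m)"
        using nvD(3)[OF nv] by simp
      also have "\<dots> \<le> (\<Sum>i<Suc m. cmod (v$i) * nv (unit_vec n i))"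
        using Suc by simp
      finally show ?case .
    qed
    have "vec n (\<lambda>i. if i<n then v$i else 0) = v" using v by (intro eq_vecI) auto
    then have "nv v \<le> (\<Sum>i<n. cmod (v$i) * nv (unit_vec n i))" using ind[of n] by simp
    also have "\<dots> \<le> (\<Sum>i<n. vn v * nv (unit_vec n i))"
      using v by (intro sum_mono mult_right_mono vn_comp nvD(1)[OF nv]) auto
    also have "\<dots> = vn v * s" by (simp add: s_def sum_distrib_left)
    also have "\<dots> \<le> (s+1) * vn v" using vn_nonneg[of v] by (simp add: algebra_simps)
    finally show "nv v \<le> (s+1) * vn v" .
  qed
  show ?thesis using main s0 by (intro exI[of _ "s+1"]) auto
qed

lemma bw_coords:
  fixes x :: "nat \<Rightarrow> nat \<Rightarrow> complex"
  assumes bd: "\<And>j i. cmod (x j i) \<le> 1"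
  shows "\<exists>r y. strict_mono r \<and> (\<forall>i<m. (\<lambda>j. x (r j) i) \<longlonglongrightarrow> y i)"
proof (induction m)
  case 0
  show ?case by (intro exI[of _ id]) (auto simp: strict_mono_def)
next
  case (Suc m)
  then obtain r y where r: "strict_mono r" and y: "\<forall>i<m. (\<lambda>j. x (r j) i) \<longlonglongrightarrow> y i" by blast
  have "seq_compact (cball (0::complex) 1)" by (rule compact_imp_seq_compact[OF compact_cball])
  moreover have "\<forall>j. x (r j) m \<in> cball 0 1" using bd by auto
  ultimately obtain l r2 where r2: "strict_mono r2" and l: "((\<lambda>j. x (r j) m) \<circ> r2) \<longlonglongrightarrow> l"
    unfolding seq_compact_def by metis
  have "strict_mono (r \<circ> r2)" using r r2 by (rule strict_mono_o)
  moreover have "\<forall>i<Suc m. (\<lambda>j. x ((r \<circ> r2) j) i) \<longlonglongrightarrow> (y(m:=l)) i"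
  proof (intro allI impI)
    fix i assume i: "i < Suc m"
    show "(\<lambda>j. x ((r \<circ> r2) j) i) \<longlonglongrightarrow> (y(m:=l)) i"
    proof (cases "i = m")
      case True then show ?thesis using l by (simp add: o_def)
    next
      case False
      then have "(\<lambda>j. x (r j) i) \<longlonglongrightarrow> y i" using y i by auto
      from LIMSEQ_subseq_LIMSEQ[OF this r2] show ?thesis using False by (simp add: o_def)
    qed
  qed
  ultimately show ?case by blast
qed

lemma nv_lower:
  assumes nv: "is_vec_norm n nv"
  shows "\<exists>k>0. \<forall>v\<in>carrier_vec n. k * vn v \<le> nv v"
proof (rule ccontr)
  assume H: "\<not> ?thesis"
  obtain a where a: "a > 0" "\<And>v. v\<in>carrier_vec n \<Longrightarrow> nv v \<le> a * vn v" using nv_upper[OF nv] by blast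
  have "\<forall>j. \<exists>v. v \<in> carrier_vec n \<and> nv v < inverse (real (Suc j)) * vn v"
  proof
    fix j
    have "inverse (real (Suc j)) > 0" by simp
    then show "\<exists>v. v \<in> carrier_vec n \<and> nv v < inverse (real (Suc j)) * vn v"
      using H by (meson not_le)
  qed
  then obtain V where V: "\<And>j. V j \<in> carrier_vec n" "\<And>j. nv (V j) < inverse (real (Suc j)) * vn (V j)"
    by metis
  have vpos: "vn (V j) > 0" for j
  proof -
    have "0 \<le> nv (V j)" using nvD(1)[OF nv V(1)] .
    then have "0 < inverse (real (Suc j)) * vn (V j)" using V(2)[of j] by linarith
    then show ?thesis by (simp add: zero_less_mult_iff)
  qed
  define W where "W j = complex_of_real (1 / vn (V j)) \<cdot>\<^sub>v V j" for j
  have W: "W j \<in> carrier_vec n" for j using V(1) by (simp add: W_def)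
  have vnW: "vn (W j) = 1" for j using vpos[of j] by (simp add: W_def vn_smult norm_divide)
  have nvW: "nv (W j) < inverse (real (Suc j))" for j
  proof -
    have "nv (W j) = (1 / vn (V j)) * nv (V j)"
      unfolding W_def using nvD(3)[OF nv V(1)] vpos[of j] by (simp add: norm_divide)
    also have "\<dots> < (1 / vn (V j)) * (inverse (real (Suc j)) * vn (V j))"
      using V(2)[of j] vpos[of j] by (intro mult_strict_left_mono) auto
    also have "\<dots> = inverse (real (Suc j))" using vpos[of j] by simp
    finally show ?thesis .
  qed
  define x where "x j i = (if i < n then W j $ i else 0)" for j i
  have bd: "cmod (x j i) \<le> 1" for j i
    using vn_comp[of i "W j"] W[of j] vnW[of j] by (auto simp: x_def)
  obtain r y where r: "strict_mono r" and y: "\<forall>i<n. (\<lambda>j. x (r j) i) \<longlonglongrightarrow> y i"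
    using bw_coords[of x n, OF bd] by auto
  define w where "w = vec n y"
  have w: "w \<in> carrier_vec n" by (simp add: w_def)
  define d where "d j = vn (w - W (r j))" for j
  have dlim: "d \<longlonglongrightarrow> 0"
  proof -
    have "d = (\<lambda>j. \<Sum>i<n. cmod (y i - x (r j) i))"
      using W by (auto simp: d_def vn_def w_def x_def intro!: ext sum.cong)
    moreover have "(\<lambda>j. \<Sum>i<n. cmod (y i - x (r j) i)) \<longlonglongrightarrow> (\<Sum>i<n. cmod (y i - y i))"
      using y by (intro tendsto_sum tendsto_norm tendsto_diff tendsto_const) auto
    ultimately show ?thesis by simp
  qed
  have vnw: "vn w = 1"
  proof -
    have "(\<lambda>j. vn (W (r j))) = (\<lambda>j. \<Sum>i<n. cmod (x (r j) i))"
      using W by (auto simp: vn_def x_def intro!: ext sum.cong)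
    moreover have "(\<lambda>j. \<Sum>i<n. cmod (x (r j) i)) \<longlonglongrightarrow> (\<Sum>i<n. cmod (y i))"
      using y by (intro tendsto_sum tendsto_norm) auto
    ultimately have "(\<lambda>j. 1::real) \<longlonglongrightarrow> vn w" using vnW by (simp add: vn_def w_def)
    from LIMSEQ_unique[OF tendsto_const this] show ?thesis by simp
  qed
  have "w \<noteq> 0\<^sub>v n"
  proof
    assume "w = 0\<^sub>v n"
    then have "vn w = 0" by (simp add: vn_def)
    with vnw show False by simp
  qed
  then have nvw: "nv w > 0" using nvD(1,2)[OF nv w] by (simp add: order_less_le)
  have bound: "nv w \<le> a * d j + inverse (real (Suc j))" for j
  proof -
    have "w = (w - W (r j)) + W (r j)" using w W[of "r j"] by (intro eq_vecI) auto
    moreover have wm: "w - W (r j) \<in> carrier_vec n" using w W[of "r j"] by simp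
    ultimately have "nv w \<le> nv (w - W (r j)) + nv (W (r j))"
      using nvD(4)[OF nv wm W[of "r j"]] by simp
    also have "\<dots> \<le> a * d j + inverse (real (Suc (r j)))"
      using a(2)[of "w - W (r j)"] w W[of "r j"] nvW[of "r j"] by (simp add: d_def)
    also have "inverse (real (Suc (r j))) \<le> inverse (real (Suc j))"
      using seq_suble[OF r, of j] by (simp add: le_imp_inverse_le)
    finally show ?thesis by simp
  qed
  have "(\<lambda>j. a * d j + inverse (real (Suc j))) \<longlonglongrightarrow> a * 0 + 0"
    by (intro tendsto_add tendsto_mult tendsto_const dlim LIMSEQ_inverse_real_of_nat)
  then have lim0: "(\<lambda>j. a * d j + inverse (real (Suc j))) \<longlonglongrightarrow> 0" by simp
  have "nv w \<le> 0"
    by (rule tendsto_le[OF trivial_limit_sequentially lim0 tendsto_const]) (rule always_eventually, use bound in blast)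
  then show False using nvw by simp
qed

lemma entry_C:
  fixes M R :: "complex mat"
  assumes M: "M \<in> carrier_mat n n" and R: "R \<in> carrier_mat n n" and u: "u \<in> carrier_vec n" and i: "i < n"
  shows "((1\<^sub>m n - c \<cdot>\<^sub>m M - R) *\<^sub>v u)$i = u$i - c * (M *\<^sub>v u)$i - (R *\<^sub>v u)$i"
proof -
  have "(1\<^sub>m n - c \<cdot>\<^sub>m M - R) *\<^sub>v u = (1\<^sub>m n - c \<cdot>\<^sub>m M) *\<^sub>v u - R *\<^sub>v u"
    using M R u by (intro minus_mult_distrib_mat_vec) auto
  also have "(1\<^sub>m n - c \<cdot>\<^sub>m M) *\<^sub>v u = 1\<^sub>m n *\<^sub>v u - (c \<cdot>\<^sub>m M) *\<^sub>v u"
    using M R u by (intro minus_mult_distrib_mat_vec) auto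
  finally show ?thesis using M R u i
    by (simp add: scalar_prod_def sum_distrib_left mult.assoc)
qed

lemma vn3: fixes x y z w :: "complex vec" assumes "dim_vec x = n" "dim_vec y = n" "dim_vec z = n" "dim_vec w = n"
  and "\<And>i. i < n \<Longrightarrow> x$i = y$i - z$i - w$i"
  shows "vn x \<le> vn y + vn z + vn w"
proof -
  have "vn x = (\<Sum>i<n. cmod (y$i - z$i - w$i))" using assms by (simp add: vn_def)
  also have "\<dots> \<le> (\<Sum>i<n. cmod (y$i) + cmod (z$i) + cmod (w$i))"
  proof (intro sum_mono)
    fix i
    have "cmod (y$i - z$i - w$i) \<le> cmod (y$i - z$i) + cmod (w$i)" by (rule norm_triangle_ineq4)
    also have "\<dots> \<le> cmod (y$i) + cmod (z$i) + cmod (w$i)" using norm_triangle_ineq4[of "y$i" "z$i"] by simp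
    finally show "cmod (y$i - z$i - w$i) \<le> cmod (y$i) + cmod (z$i) + cmod (w$i)" .
  qed
  also have "\<dots> = vn y + vn z + vn w" using assms by (simp add: vn_def sum.distrib)
  finally show ?thesis .
qed

lemma asym_inv:
  fixes M B R :: "complex mat"
  assumes M: "M \<in> carrier_mat n n" and B: "B \<in> carrier_mat n n" and BM: "B * M = 1\<^sub>m n"
    and R: "R \<in> carrier_mat n n"
  shows "\<exists>\<mu>1>0. \<exists>K. \<forall>\<mu>\<ge>\<mu>1.
     minv (1\<^sub>m n - complex_of_real \<mu> \<cdot>\<^sub>m M - R) \<in> carrier_mat n n \<and>
     (1\<^sub>m n - complex_of_real \<mu> \<cdot>\<^sub>m M - R) * minv (1\<^sub>m n - complex_of_real \<mu> \<cdot>\<^sub>m M - R) = 1\<^sub>m n \<and>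
     minv (1\<^sub>m n - complex_of_real \<mu> \<cdot>\<^sub>m M - R) * (1\<^sub>m n - complex_of_real \<mu> \<cdot>\<^sub>m M - R) = 1\<^sub>m n \<and>
     (\<forall>w\<in>carrier_vec n. vn (minv (1\<^sub>m n - complex_of_real \<mu> \<cdot>\<^sub>m M - R) *\<^sub>v w) \<le> K / \<mu> * vn w)"
proof -
  define b where "b = mabs B + 1"
  define r where "r = mabs R"
  have b0: "b > 0" using mabs_nonneg[of B] by (simp add: b_def)
  have r0: "r \<ge> 0" using mabs_nonneg[of R] by (simp add: r_def)
  define \<mu>1 where "\<mu>1 = 2*b*(1+r) + 1"
  have mu1: "\<mu>1 > 0" using b0 r0 by (simp add: \<mu>1_def add_pos_nonneg)
  have main: "\<forall>\<mu>\<ge>\<mu>1.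
     minv (1\<^sub>m n - complex_of_real \<mu> \<cdot>\<^sub>m M - R) \<in> carrier_mat n n \<and>
     (1\<^sub>m n - complex_of_real \<mu> \<cdot>\<^sub>m M - R) * minv (1\<^sub>m n - complex_of_real \<mu> \<cdot>\<^sub>m M - R) = 1\<^sub>m n \<and>
     minv (1\<^sub>m n - complex_of_real \<mu> \<cdot>\<^sub>m M - R) * (1\<^sub>m n - complex_of_real \<mu> \<cdot>\<^sub>m M - R) = 1\<^sub>m n \<and>
     (\<forall>w\<in>carrier_vec n. vn (minv (1\<^sub>m n - complex_of_real \<mu> \<cdot>\<^sub>m M - R) *\<^sub>v w) \<le> (2*b) / \<mu> * vn w)"
  proof (intro allI impI)
    fix \<mu> :: real assume mu: "\<mu>1 \<le> \<mu>"
    then have mupos: "\<mu> > 0" using mu1 by linarith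
    define C where "C = 1\<^sub>m n - complex_of_real \<mu> \<cdot>\<^sub>m M - R"
    have C: "C \<in> carrier_mat n n" using M R unfolding C_def by (intro minus_carrier_mat) auto
    have key: "\<mu> / (2*b) * vn u \<le> vn (C *\<^sub>v u)" if u: "u \<in> carrier_vec n" for u
    proof -
      have "vn u = vn (B *\<^sub>v (M *\<^sub>v u))"
        using assoc_mult_mat_vec[OF B M u] BM u by simp
      also have "\<dots> \<le> mabs B * vn (M *\<^sub>v u)" using B M u by (intro vn_mult) auto
      also have "\<dots> \<le> b * vn (M *\<^sub>v u)" using vn_nonneg[of "M *\<^sub>v u"] by (simp add: b_def algebra_simps)
      finally have h1: "vn u \<le> b * vn (M *\<^sub>v u)" .
      have "vn (complex_of_real \<mu> \<cdot>\<^sub>v (M *\<^sub>v u)) \<le> vn u + vn (R *\<^sub>v u) + vn (C *\<^sub>v u)"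
        using M R u C by (intro vn3[where n=n]) (auto simp: C_def entry_C simp del: index_mult_mat_vec)
      also have "vn (R *\<^sub>v u) \<le> r * vn u" unfolding r_def using R u by (rule vn_mult)
      finally have h2: "\<mu> * vn (M *\<^sub>v u) \<le> vn u + r * vn u + vn (C *\<^sub>v u)"
        using mupos by (simp add: vn_smult)
      have "\<mu> / (2*b) * vn u \<le> \<mu> / (2*b) * (b * vn (M *\<^sub>v u))"
        using h1 mupos b0 by (intro mult_left_mono) auto
      also have "\<dots> = (\<mu> * vn (M *\<^sub>v u)) / 2" using b0 by (simp add: field_simps)
      also have "\<dots> \<le> (vn u + r * vn u + vn (C *\<^sub>v u)) / 2" using h2 by simp
      finally have h3: "\<mu> / (2*b) * vn u \<le> ((1+r) * vn u + vn (C *\<^sub>v u)) / 2" by (simp add: algebra_simps)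
      have "(1+r) \<le> \<mu> / (2*b)" using mu b0 by (simp add: \<mu>1_def field_simps)
      then have "(1+r) * vn u \<le> \<mu> / (2*b) * vn u" using vn_nonneg[of u] by (rule mult_right_mono)
      moreover have "\<And>X Y Z::real. X \<le> (Y+Z)/2 \<Longrightarrow> Y \<le> X \<Longrightarrow> X \<le> Z" by (auto simp: field_simps)
      ultimately show ?thesis using h3 by blast
    qed
    have inj: "u = 0\<^sub>v n" if u: "u \<in> carrier_vec n" and Cu: "C *\<^sub>v u = 0\<^sub>v n" for u
    proof (rule ccontr)
      assume "u \<noteq> 0\<^sub>v n"
      then have "vn u > 0" using vn_pos[of u] u by auto
      then have "\<mu> / (2*b) * vn u > 0" using mupos b0 by simp
      moreover have "vn (C *\<^sub>v u) = 0" using Cu by (simp add: vn_def)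
      ultimately show False using key[OF u] by linarith
    qed
    from minv_inj[OF C inj] have CI: "minv C \<in> carrier_mat n n" "C * minv C = 1\<^sub>m n" "minv C * C = 1\<^sub>m n" by auto
    have bnd: "vn (minv C *\<^sub>v w) \<le> (2*b) / \<mu> * vn w" if w: "w \<in> carrier_vec n" for w
    proof -
      have u: "minv C *\<^sub>v w \<in> carrier_vec n" using CI w by simp
      have "C *\<^sub>v (minv C *\<^sub>v w) = w" using assoc_mult_mat_vec[OF C CI(1) w] CI w by simp
      then have "\<mu> / (2*b) * vn (minv C *\<^sub>v w) \<le> vn w" using key[OF u] by simp
      then have "vn (minv C *\<^sub>v w) \<le> vn w / (\<mu> / (2*b))" using mupos b0 by (simp add: field_simps)
      then show ?thesis by (simp add: field_simps)
    qed
    show "minv (1\<^sub>m n - complex_of_real \<mu> \<cdot>\<^sub>m M - R) \<in> carrier_mat n n \<and>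
     (1\<^sub>m n - complex_of_real \<mu> \<cdot>\<^sub>m M - R) * minv (1\<^sub>m n - complex_of_real \<mu> \<cdot>\<^sub>m M - R) = 1\<^sub>m n \<and>
     minv (1\<^sub>m n - complex_of_real \<mu> \<cdot>\<^sub>m M - R) * (1\<^sub>m n - complex_of_real \<mu> \<cdot>\<^sub>m M - R) = 1\<^sub>m n \<and>
     (\<forall>w\<in>carrier_vec n. vn (minv (1\<^sub>m n - complex_of_real \<mu> \<cdot>\<^sub>m M - R) *\<^sub>v w) \<le> (2*b) / \<mu> * vn w)"
      using CI bnd unfolding C_def by blast
  qed
  show ?thesis using mu1 main by blast
qed

lemma minv_inj_real:
  fixes A :: "real mat"
  assumes A: "A \<in> carrier_mat n n" and inj: "\<And>v. v \<in> carrier_vec n \<Longrightarrow> A *\<^sub>v v = 0\<^sub>v n \<Longrightarrow> v = 0\<^sub>v n"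
  shows "minv A \<in> carrier_mat n n \<and> A * minv A = 1\<^sub>m n \<and> minv A * A = 1\<^sub>m n"
proof -
  have "Determinant.det A \<noteq> 0" using det_0_iff_vec_prod_zero_field[OF A] inj by blast
  from det_non_zero_imp_unit[OF A this, of "()"] have U: "A \<in> Units (ring_mat TYPE(real) n ())" .
  have "mat_inverse A \<noteq> None" using mat_inverse(1)[OF A, of "()"] U by blast
  then obtain B where B: "mat_inverse A = Some B" by auto
  then have "minv A = B" by (simp add: minv_def)
  then show ?thesis using mat_inverse(2)[OF A B] by simp
qed

lemma poly_antideriv:
  fixes p :: "real poly"
  shows "\<exists>P. pderiv P = p \<and> degree P \<le> Suc (degree p)"
proof -
  define P where "P = Poly (0 # map (\<lambda>i. coeff p i / real (Suc i)) [0..<Suc (degree p)])"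
  have cP: "coeff P (Suc n) = coeff p n / real (Suc n)" for n
  proof (cases "n \<le> degree p")
    case True then show ?thesis by (simp add: P_def nth_default_def nth_append del: upt_Suc)
  next
    case False then show ?thesis by (simp add: P_def nth_default_def coeff_eq_0)
  qed
  have "pderiv P = p" by (rule poly_eqI) (simp add: coeff_pderiv cP)
  moreover have "degree P \<le> Suc (degree p)"
  proof (rule degree_le, intro allI impI)
    fix i assume "Suc (degree p) < i"
    then obtain n where "i = Suc n" "degree p < n" by (cases i) auto
    then show "coeff P i = 0" by (simp add: cP coeff_eq_0)
  qed
  ultimately show ?thesis by blast
qed

lemma poly_has_integral:
  fixes P :: "real poly"
  assumes "a \<le> b"
  shows "(poly (pderiv P) has_integral (poly P b - poly P a)) {a..b}"
proof (rule fundamental_theorem_of_calculus[OF assms])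
  fix x assume "x \<in> {a..b}"
  have "(poly P has_real_derivative poly (pderiv P) x) (at x within {a..b})"
    by (rule DERIV_subset[OF poly_DERIV]) auto
  then show "(poly P has_vector_derivative poly (pderiv P) x) (at x within {a..b})"
    by (simp add: has_real_derivative_iff_has_vector_derivative)
qed

definition lp :: "nat \<Rightarrow> (nat \<Rightarrow> real) \<Rightarrow> nat \<Rightarrow> real poly" where
  "lp M \<tau> j = (\<Prod>i\<in>{..<M} - {j}. [:- \<tau> i / (\<tau> j - \<tau> i), 1 / (\<tau> j - \<tau> i):])"

lemma poly_lp: "poly (lp M \<tau> j) s = lagrange_basis M \<tau> j s"
  unfolding lp_def lagrange_basis_def poly_prod
  by (intro prod.cong refl) (simp add: diff_divide_distrib)

lemma degree_lp: assumes "j < M" shows "degree (lp M \<tau> j) \<le> M - 1"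
proof -
  have "degree (lp M \<tau> j) \<le> sum (degree \<circ> (\<lambda>i. [:- \<tau> i / (\<tau> j - \<tau> i), 1 / (\<tau> j - \<tau> i):])) ({..<M} - {j})"
    unfolding lp_def by (rule degree_prod_sum_le) simp
  also have "\<dots> \<le> (\<Sum>i\<in>{..<M} - {j}. 1)"
  proof (intro sum_mono)
    fix i
    show "(degree \<circ> (\<lambda>i. [:- \<tau> i / (\<tau> j - \<tau> i), 1 / (\<tau> j - \<tau> i):])) i \<le> 1"
      using degree_pCons_le[of "- \<tau> i / (\<tau> j - \<tau> i)" "[:1 / (\<tau> j - \<tau> i):]"] by simp
  qed
  also have "\<dots> = M - 1" using assms by simp
  finally show ?thesis .
qed

lemma lagrange_nodes:
  assumes mono: "\<And>i j. i < j \<Longrightarrow> j < M \<Longrightarrow> \<tau> i < \<tau> (j::nat)" and j: "j < M" and k: "k < M"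
  shows "lagrange_basis M \<tau> j (\<tau> k) = (if k = j then 1 else 0)"
proof (cases "k = j")
  case True
  have "(\<tau> j - \<tau> i) / (\<tau> j - \<tau> i) = 1" if "i \<in> {..<M} - {j}" for i
  proof -
    have "\<tau> j \<noteq> \<tau> i" using that j mono[of i j] mono[of j i] by (cases "i < j") auto
    then show ?thesis by simp
  qed
  then show ?thesis using True unfolding lagrange_basis_def by simp
next
  case False
  then have "k \<in> {..<M} - {j}" using k by simp
  then show ?thesis using False unfolding lagrange_basis_def
    by (intro trans[OF prod_zero]) auto
qed

lemma collocQ_inj:
  fixes c :: "real Matrix.vec"
  assumes rad: "radau_right_nodes M \<tau>" and M0: "0 < M"
    and c: "c \<in> carrier_vec M" and Qc: "collocQ M \<tau> *\<^sub>v c = 0\<^sub>v M"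
  shows "c = 0\<^sub>v M"
proof -
  have mono: "\<And>i j. i < j \<Longrightarrow> j < M \<Longrightarrow> \<tau> i < \<tau> j" and t0: "0 < \<tau> 0"
    using rad unfolding radau_right_nodes_def by auto
  have tpos: "0 < \<tau> m" if "m < M" for m
  proof (cases m)
    case 0 then show ?thesis using t0 by simp
  next
    case (Suc k) then show ?thesis using t0 mono[of 0 m] that by simp
  qed
  define p where "p = (\<Sum>j<M. Polynomial.smult (c$j) (lp M \<tau> j))"
  have polyp: "poly p s = (\<Sum>j<M. c$j * lagrange_basis M \<tau> j s)" for s
    by (simp add: p_def poly_sum poly_lp)
  have degp: "degree p \<le> M - 1"
  proof -
    have "degree (Polynomial.smult (c$j) (lp M \<tau> j)) \<le> M - 1" if "j < M" for j
      using order.trans[OF Polynomial.degree_smult_le degree_lp[OF that]] .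
    then show ?thesis unfolding p_def by (intro degree_sum_le) auto
  qed
  have pnode: "poly p (\<tau> k) = c$k" if "k < M" for k
  proof -
    have "poly p (\<tau> k) = (\<Sum>j<M. c$j * (if k = j then 1 else 0))"
      unfolding polyp using lagrange_nodes[where M=M and \<tau>=\<tau>, OF mono] that by (intro sum.cong) auto
    also have "\<dots> = c$k" using that by (simp add: if_distrib[of "\<lambda>x. c$_ * x"] sum.delta cong: if_cong)
    finally show ?thesis .
  qed
  obtain P where P: "pderiv P = p" "degree P \<le> Suc (degree p)" using poly_antideriv by blast
  define R where "R = P - [:poly P 0:]"
  have intp: "integral {0..\<tau> m} (poly p) = 0" if m: "m < M" for m
  proof -
    have hj: "(lagrange_basis M \<tau> j has_integral integral {0..\<tau> m} (lagrange_basis M \<tau> j)) {0..\<tau> m}" for j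
    proof -
      obtain Pj where "pderiv Pj = lp M \<tau> j" "degree Pj \<le> Suc (degree (lp M \<tau> j))"
        using poly_antideriv by blast
      then have "(poly (lp M \<tau> j) has_integral (poly Pj (\<tau> m) - poly Pj 0)) {0..\<tau> m}"
        using poly_has_integral[of 0 "\<tau> m" Pj] tpos[OF m] by simp
      then have "lagrange_basis M \<tau> j integrable_on {0..\<tau> m}"
        by (metis has_integral_integrable poly_lp ext)
      then show ?thesis by (rule integrable_integral)
    qed
    have "((\<lambda>s. \<Sum>j<M. c$j * lagrange_basis M \<tau> j s) has_integral
           (\<Sum>j<M. c$j * integral {0..\<tau> m} (lagrange_basis M \<tau> j))) {0..\<tau> m}"
      by (intro has_integral_sum has_integral_mult_right hj) auto
    moreover have "(\<Sum>j<M. c$j * integral {0..\<tau> m} (lagrange_basis M \<tau> j)) = (collocQ M \<tau> *\<^sub>v c) $ m"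
      using c m by (simp add: collocQ_def scalar_prod_def lessThan_atLeast0 mult.commute)
    ultimately have "(poly p has_integral 0) {0..\<tau> m}"
      using Qc m by (simp add: polyp[symmetric] ext)
    then show ?thesis by (rule integral_unique)
  qed
  have Rroot: "poly R (\<tau> m) = 0" if m: "m < M" for m
  proof -
    have "(poly p has_integral (poly P (\<tau> m) - poly P 0)) {0..\<tau> m}"
      using poly_has_integral[of 0 "\<tau> m" P] tpos[OF m] P(1) by simp
    then have "integral {0..\<tau> m} (poly p) = poly P (\<tau> m) - poly P 0" by (rule integral_unique)
    then show ?thesis using intp[OF m] by (simp add: R_def)
  qed
  have R0: "poly R 0 = 0" by (simp add: R_def)
  have degR: "degree R \<le> M"
  proof -
    have "degree P \<le> M" using P(2) degp M0 by linarith
    then show ?thesis unfolding R_def by (intro degree_diff_le) auto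
  qed
  have "R = 0"
  proof (rule ccontr)
    assume Rnz: "R \<noteq> 0"
    have sub: "insert 0 (\<tau> ` {..<M}) \<subseteq> {x. poly R x = 0}" using Rroot R0 by auto
    have inj: "inj_on \<tau> {..<M}"
    proof (rule inj_onI)
      fix x y assume "x \<in> {..<M}" "y \<in> {..<M}" "\<tau> x = \<tau> y"
      then show "x = y" using mono[of x y] mono[of y x] by (cases x y rule: linorder_cases) auto
    qed
    have "0 \<notin> \<tau> ` {..<M}" using tpos by force
    then have "card (insert 0 (\<tau> ` {..<M})) = Suc M" using inj by (simp add: card_image)
    also have "\<dots> \<le> card {x. poly R x = 0}"
      using card_mono[OF poly_roots_finite[OF Rnz] sub] \<open>0 \<notin> \<tau> ` {..<M}\<close> inj by (simp add: card_image)
    also have "\<dots> \<le> degree R" by (rule card_poly_roots_bound[OF Rnz])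
    finally show False using degR \<open>0 \<notin> \<tau> ` {..<M}\<close> inj by (simp add: card_image)
  qed
  then have "pderiv R = 0" by simp
  then have "p = 0" unfolding R_def using P(1) by (simp add: pderiv_diff pderiv_pCons)
  then show ?thesis using pnode c by (intro eq_vecI) auto
qed

lemma inv_left:
  fixes A :: "'a::semiring_1 mat"
  assumes A: "A \<in> carrier_mat k k" and inv: "invertible_mat A"
  shows "\<exists>B. B \<in> carrier_mat k k \<and> B * A = 1\<^sub>m k"
proof -
  obtain B where AB: "A * B = 1\<^sub>m (dim_row A)" and BA: "B * A = 1\<^sub>m (dim_row B)"
    using inv unfolding invertible_mat_def inverts_mat_def by blast
  have "dim_col B = k" using arg_cong[OF AB, of dim_col] A by simp
  moreover have "dim_row B = k" using arg_cong[OF BA, of dim_col] A by simp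
  ultimately show ?thesis using BA by (intro exI[of _ B]) auto
qed

lemma induced_bound:
  assumes nv: "is_vec_norm n nv" and Bc: "B \<in> carrier_mat n n" and v: "v \<in> carrier_vec n"
  shows "nv (B *\<^sub>v v) \<le> induced_norm nv n B * nv v"
proof (cases "v = 0\<^sub>v n")
  case True
  then have "B *\<^sub>v v = 0\<^sub>v n" using Bc by auto
  moreover have "nv (0\<^sub>v n) = 0" using nvD(2)[OF nv, of "0\<^sub>v n"] by simp
  ultimately show ?thesis using True by simp
next
  case False
  obtain a where a: "a > 0" "\<And>v. v\<in>carrier_vec n \<Longrightarrow> nv v \<le> a * vn v" using nv_upper[OF nv] by blast
  obtain k0 where k0: "k0 > 0" "\<And>v. v\<in>carrier_vec n \<Longrightarrow> k0 * vn v \<le> nv v" using nv_lower[OF nv] by blast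
  have pos: "nv w > 0" if "w \<in> carrier_vec n" "w \<noteq> 0\<^sub>v n" for w
    using nvD(1,2)[OF nv that(1)] that(2) by (simp add: order_less_le)
  have bdd: "bdd_above {nv (B *\<^sub>v w) / nv w | w. w \<in> carrier_vec n \<and> w \<noteq> 0\<^sub>v n}"
  proof (rule bdd_aboveI, clarify)
    fix w :: "complex vec" assume w: "w \<in> carrier_vec n" "w \<noteq> 0\<^sub>v n"
    have vw: "vn w > 0" using vn_pos[of w] w by auto
    have "nv (B *\<^sub>v w) \<le> a * vn (B *\<^sub>v w)" using a(2)[of "B *\<^sub>v w"] Bc w by simp
    also have "\<dots> \<le> a * (mabs B * vn w)" using vn_mult[OF Bc w(1)] a(1) by simp
    finally have h1: "nv (B *\<^sub>v w) \<le> a * mabs B * vn w" by simp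
    have h2: "k0 * vn w \<le> nv w" using k0(2) w by simp
    have "nv (B *\<^sub>v w) / nv w \<le> (a * mabs B * vn w) / (k0 * vn w)"
      using h1 h2 pos[OF w] k0(1) vw nvD(1)[OF nv, of "B *\<^sub>v w"] Bc w
      by (intro frac_le) (auto intro: mult_nonneg_nonneg mabs_nonneg)
    also have "\<dots> = a * mabs B / k0" using vw k0(1) by simp
    finally show "nv (B *\<^sub>v w) / nv w \<le> a * mabs B / k0" .
  qed
  have "nv (B *\<^sub>v v) / nv v \<le> induced_norm nv n B"
    unfolding induced_norm_def using v False by (intro cSup_upper[OF _ bdd]) auto
  then show ?thesis using pos[OF v False] by (simp add: divide_le_eq)
qed

lemma induced_le:
  assumes nv: "is_vec_norm n nv" and n0: "0 < n"
    and H: "\<And>v. v \<in> carrier_vec n \<Longrightarrow> v \<noteq> 0\<^sub>v n \<Longrightarrow> nv (T *\<^sub>v v) \<le> \<beta> * nv v"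
  shows "induced_norm nv n T \<le> \<beta>"
  unfolding induced_norm_def
proof (rule cSup_least)
  have "(unit_vec n 0 :: complex Matrix.vec) $ 0 = 1" "(0\<^sub>v n :: complex Matrix.vec) $ 0 = 0" using n0 by auto
  then have "unit_vec n 0 \<in> carrier_vec n" "(unit_vec n 0 :: complex Matrix.vec) \<noteq> 0\<^sub>v n" by auto
  then show "{nv (T *\<^sub>v v) / nv v |v. v \<in> carrier_vec n \<and> v \<noteq> 0\<^sub>v n} \<noteq> {}" by blast
next
  fix x assume "x \<in> {nv (T *\<^sub>v v) / nv v |v. v \<in> carrier_vec n \<and> v \<noteq> 0\<^sub>v n}"
  then obtain v where v: "v \<in> carrier_vec n" "v \<noteq> 0\<^sub>v n" and x: "x = nv (T *\<^sub>v v) / nv v" by blast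
  have "nv v > 0" using nvD(1,2)[OF nv v(1)] v(2) by (simp add: order_less_le)
  then show "x \<le> \<beta>" using H[OF v] x by (simp add: divide_le_eq)
qed

theorem theorem5:
  fixes L M N Mt Nt :: nat
    and \<tau> :: "nat \<Rightarrow> real"
    and LQ UQ QD QDt :: "real mat"
    and A At :: "complex mat"
    and TFCQ TFCA TCFQ TCFA :: "real mat"
    and nv :: "complex vec \<Rightarrow> real"
  defines "Q \<equiv> collocQ M \<tau>"
    and "TFC \<equiv> kron (1\<^sub>m L) (kron (cmat TFCQ) (cmat TFCA))"
    and "TCF \<equiv> kron (1\<^sub>m L) (kron (cmat TCFQ) (cmat TCFA))"
  assumes "0 < L" "0 < M" "0 < N" "0 < Mt" "0 < Nt" "Mt \<le> M" "Nt \<le> N"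
    and "radau_right_nodes M \<tau>"
    and "LQ \<in> carrier_mat M M" "UQ \<in> carrier_mat M M"
    and "unit_lower_triangular LQ" "upper_triangular UQ"
    and "transpose_mat Q = LQ * UQ" "QD = transpose_mat UQ"
    and "QDt \<in> carrier_mat Mt Mt" "lower_triangular QDt" "invertible_mat QDt"
    and "A \<in> carrier_mat N N" "invertible_mat A"
    and "At \<in> carrier_mat Nt Nt" "invertible_mat At"
    and "TFCQ \<in> carrier_mat Mt M" "TFCA \<in> carrier_mat Nt N"
    and "TCFQ \<in> carrier_mat M Mt" "TCFA \<in> carrier_mat N Nt"
    and "kron (shiftE L) (Hmat Mt Nt) * TFC = TFC * kron (shiftE L) (Hmat M N)"
    and "is_vec_norm (L*M*N) nv"
    and smoothing: "\<exists>c \<mu>0. \<forall>k::nat. \<forall>\<mu>::real. 1 \<le> k \<and> \<mu>0 \<le> \<mu> \<longrightarrow>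
           induced_norm nv (L*M*N) (Cmat L M N Q A \<mu> * (T2mat L M N Q QD A \<mu>) ^\<^sub>m k)
             \<le> c * sqrt (8 / (real k * pi)) * \<mu>"
  shows "\<exists>c>0. \<exists>\<mu>s>0. \<forall>k::nat. \<forall>\<mu>::real. 1 \<le> k \<and> \<mu>s \<le> \<mu> \<longrightarrow>
           induced_norm nv (L*M*N) (Tpfasst L M N Mt Nt Q QD QDt A At TCF TFC \<mu> k)
             \<le> c / sqrt (real k)"
proof -
  note a = assms(4-31)
  note nv = a(27)
  let ?n = "L*M*N"
  let ?nt = "L*Mt*Nt"
  have n0: "0 < ?n" using a(1-3) by simp
  have Qc: "Q \<in> carrier_mat M M" by (simp add: Q_def collocQ_def)
  have Qinj: "\<And>v. v \<in> carrier_vec M \<Longrightarrow> Q *\<^sub>v v = 0\<^sub>v M \<Longrightarrow> v = 0\<^sub>v M"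
    unfolding Q_def using collocQ_inj[OF a(8) a(2)] by blast
  from minv_inj_real[OF Qc Qinj] obtain Qi where Qi: "Qi \<in> carrier_mat M M" "Q * Qi = 1\<^sub>m M" "Qi * Q = 1\<^sub>m M"
    by blast
  obtain Ba where Ba: "Ba \<in> carrier_mat N N" "Ba * A = 1\<^sub>m N" using inv_left[OF a(18,19)] by blast
  obtain Bat where Bat: "Bat \<in> carrier_mat Nt Nt" "Bat * At = 1\<^sub>m Nt" using inv_left[OF a(20,21)] by blast
  obtain Bq where Bq: "Bq \<in> carrier_mat Mt Mt" "Bq * QDt = 1\<^sub>m Mt" using inv_left[OF a(15,17)] by blast
  have QT: "transpose_mat Qi * transpose_mat Q = 1\<^sub>m M"
    using transpose_mult[OF Qc Qi(1)] Qi(2) by simp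
  have UQinj: "v = 0\<^sub>v M" if v: "v \<in> carrier_vec M" "UQ *\<^sub>v v = 0\<^sub>v M" for v
  proof -
    have "transpose_mat Q *\<^sub>v v = LQ *\<^sub>v (UQ *\<^sub>v v)" using a(13) a(9,10) v by simp
    also have "\<dots> = 0\<^sub>v M" using v a(9) by (intro eq_vecI) (auto simp: scalar_prod_def)
    finally have "transpose_mat Qi *\<^sub>v (transpose_mat Q *\<^sub>v v) = 0\<^sub>v M" using Qi
      by (simp, intro eq_vecI) (auto simp: scalar_prod_def)
    then show ?thesis using assoc_mult_mat_vec[of "transpose_mat Qi" M M "transpose_mat Q" M v] QT Qc Qi v by simp
  qed
  from minv_inj_real[OF a(10) UQinj] obtain Ui where Ui: "Ui \<in> carrier_mat M M" "UQ * Ui = 1\<^sub>m M" by blast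
  have QDc: "QD \<in> carrier_mat M M" using a(14) a(10) by simp
  have DiQD: "transpose_mat Ui * QD = 1\<^sub>m M" using transpose_mult[OF a(10) Ui(1)] Ui(2) a(14) by simp
  define Bd where "Bd = (1/2) \<cdot>\<^sub>m transpose_mat Ui"
  have Bd: "Bd \<in> carrier_mat M M" "Bd * (2 \<cdot>\<^sub>m QD) = 1\<^sub>m M"
  proof -
    show "Bd \<in> carrier_mat M M" using Ui by (simp add: Bd_def)
    have "Bd * (2 \<cdot>\<^sub>m QD) = transpose_mat Ui * QD"
      using Ui QDc by (intro eq_matI) (auto simp: Bd_def scalar_prod_def intro!: sum.cong)
    then show "Bd * (2 \<cdot>\<^sub>m QD) = 1\<^sub>m M" using DiQD by simp
  qed
  define Mf where "Mf = kron (1\<^sub>m L) (kron (cmat Q) A)"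
  define Rf where "Rf = (kron (shiftE L) (Hmat M N) :: complex mat)"
  define Mp where "Mp = kron (1\<^sub>m L) (kron (cmat (2 \<cdot>\<^sub>m QD)) A)"
  define Mc where "Mc = kron (1\<^sub>m L) (kron (cmat QDt) At)"
  define Rc where "Rc = (kron (shiftE L) (Hmat Mt Nt) :: complex mat)"
  have shc: "shiftE L \<in> carrier_mat L L" by (simp add: shiftE_def)
  have Hc: "Hmat K1 K2 \<in> carrier_mat (K1*K2) (K1*K2)" for K1 K2 unfolding Hmat_def by (rule kron_carrier) (auto simp: lastcolN_def)
  have cmc: "\<And>X a b. X \<in> carrier_mat a b \<Longrightarrow> cmat X \<in> carrier_mat a b" by (auto simp: cmat_def)
  have Mfc: "Mf \<in> carrier_mat ?n ?n" unfolding Mf_def mult.assoc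
    using Qc a(18) by (intro kron_carrier one_carrier_mat cmc)
  have Mpc: "Mp \<in> carrier_mat ?n ?n" unfolding Mp_def mult.assoc
    using QDc a(18) by (intro kron_carrier one_carrier_mat cmc smult_carrier_mat)
  have Mcc: "Mc \<in> carrier_mat ?nt ?nt" unfolding Mc_def mult.assoc
    using a(15,20) by (intro kron_carrier one_carrier_mat cmc)
  have Rfc: "Rf \<in> carrier_mat ?n ?n" unfolding Rf_def mult.assoc
    using shc Hc[of M N] by (intro kron_carrier)
  have Rcc: "Rc \<in> carrier_mat ?nt ?nt" unfolding Rc_def mult.assoc
    using shc Hc[of Mt Nt] by (intro kron_carrier)
  have Bfc: "kron (1\<^sub>m L) (kron (cmat Qi) Ba) \<in> carrier_mat ?n ?n" unfolding mult.assoc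
    using Qi Ba by (intro kron_carrier one_carrier_mat cmc) auto
  have Bpc: "kron (1\<^sub>m L) (kron (cmat Bd) Ba) \<in> carrier_mat ?n ?n" unfolding mult.assoc
    using Bd Ba by (intro kron_carrier one_carrier_mat cmc) auto
  have Bcc: "kron (1\<^sub>m L) (kron (cmat Bq) Bat) \<in> carrier_mat ?nt ?nt" unfolding mult.assoc
    using Bq Bat by (intro kron_carrier one_carrier_mat cmc) auto
  have cm1: "cmat Qi * cmat Q = 1\<^sub>m M" using cmat_mult[OF Qi(1) Qc] Qi(3) cmat_one by simp
  have cm2: "cmat Bd * cmat (2 \<cdot>\<^sub>m QD) = 1\<^sub>m M" using cmat_mult[OF Bd(1), of "2 \<cdot>\<^sub>m QD" M] QDc Bd(2) cmat_one by simp
  have cm3: "cmat Bq * cmat QDt = 1\<^sub>m Mt" using cmat_mult[OF Bq(1) a(15)] Bq(2) cmat_one by simp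
  have BMf: "kron (1\<^sub>m L) (kron (cmat Qi) Ba) * Mf = 1\<^sub>m ?n"
  proof -
    have "kron (1\<^sub>m L) (kron (cmat Qi) Ba) * Mf = kron (1\<^sub>m L * 1\<^sub>m L) (kron (cmat Qi) Ba * kron (cmat Q) A)"
      unfolding Mf_def using Qi Ba Qc a(18) by (intro kron_mult) (auto intro!: kron_carrier)
    also have "kron (cmat Qi) Ba * kron (cmat Q) A = kron (cmat Qi * cmat Q) (Ba * A)"
      using Qi Ba Qc a(18) by (intro kron_mult) auto
    finally show ?thesis using cm1 Ba by (simp add: kron_one mult.assoc)
  qed
  have BMp: "kron (1\<^sub>m L) (kron (cmat Bd) Ba) * Mp = 1\<^sub>m ?n"
  proof -
    have "kron (1\<^sub>m L) (kron (cmat Bd) Ba) * Mp = kron (1\<^sub>m L * 1\<^sub>m L) (kron (cmat Bd) Ba * kron (cmat (2 \<cdot>\<^sub>m QD)) A)"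
      unfolding Mp_def using Bd Ba QDc a(18) by (intro kron_mult) (auto intro!: kron_carrier)
    also have "kron (cmat Bd) Ba * kron (cmat (2 \<cdot>\<^sub>m QD)) A = kron (cmat Bd * cmat (2 \<cdot>\<^sub>m QD)) (Ba * A)"
      using Bd Ba QDc a(18) by (intro kron_mult) auto
    finally show ?thesis using cm2 Ba by (simp add: kron_one mult.assoc)
  qed
  have BMc: "kron (1\<^sub>m L) (kron (cmat Bq) Bat) * Mc = 1\<^sub>m ?nt"
  proof -
    have "kron (1\<^sub>m L) (kron (cmat Bq) Bat) * Mc = kron (1\<^sub>m L * 1\<^sub>m L) (kron (cmat Bq) Bat * kron (cmat QDt) At)"
      unfolding Mc_def using Bq Bat a(15,20) by (intro kron_mult) (auto intro!: kron_carrier)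
    also have "kron (cmat Bq) Bat * kron (cmat QDt) At = kron (cmat Bq * cmat QDt) (Bat * At)"
      using Bq Bat a(15,20) by (intro kron_mult) auto
    finally show ?thesis using cm3 Bat by (simp add: kron_one mult.assoc)
  qed
  have Cdef: "Cmat L M N Q A \<mu> = 1\<^sub>m ?n - complex_of_real \<mu> \<cdot>\<^sub>m Mf - Rf" for \<mu>
    by (simp add: Cmat_def Mf_def Rf_def)
  have Pdef: "Ptilde L Mt Nt QDt At \<mu> = 1\<^sub>m ?nt - complex_of_real \<mu> \<cdot>\<^sub>m Mc - Rc" for \<mu>
    by (simp add: Ptilde_def Mc_def Rc_def)
  have P2def: "P2hat L M N QD A \<mu> = 1\<^sub>m ?n - complex_of_real \<mu> \<cdot>\<^sub>m Mp - 0\<^sub>m ?n ?n" for \<mu>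
  proof -
    have "1\<^sub>m ?n - complex_of_real \<mu> \<cdot>\<^sub>m Mp - 0\<^sub>m ?n ?n = 1\<^sub>m ?n - complex_of_real \<mu> \<cdot>\<^sub>m Mp"
      using Mpc by (intro eq_matI) auto
    then show ?thesis by (simp add: P2hat_def Mp_def)
  qed
  obtain \<mu>1 K1 where mu1: "\<mu>1 > 0" and K1: "\<And>\<mu>. \<mu> \<ge> \<mu>1 \<Longrightarrow>
     minv (Cmat L M N Q A \<mu>) \<in> carrier_mat ?n ?n \<and>
     Cmat L M N Q A \<mu> * minv (Cmat L M N Q A \<mu>) = 1\<^sub>m ?n \<and>
     minv (Cmat L M N Q A \<mu>) * Cmat L M N Q A \<mu> = 1\<^sub>m ?n \<and>
     (\<forall>w\<in>carrier_vec ?n. vn (minv (Cmat L M N Q A \<mu>) *\<^sub>v w) \<le> K1 / \<mu> * vn w)"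
    using asym_inv[OF Mfc Bfc BMf Rfc] unfolding Cdef[symmetric] by blast
  obtain \<mu>2 K2 where mu2: "\<mu>2 > 0" and K2: "\<And>\<mu>. \<mu> \<ge> \<mu>2 \<Longrightarrow>
     minv (Ptilde L Mt Nt QDt At \<mu>) \<in> carrier_mat ?nt ?nt \<and>
     (\<forall>w\<in>carrier_vec ?nt. vn (minv (Ptilde L Mt Nt QDt At \<mu>) *\<^sub>v w) \<le> K2 / \<mu> * vn w)"
    using asym_inv[OF Mcc Bcc BMc Rcc] unfolding Pdef[symmetric] by blast
  obtain \<mu>3 where mu3: "\<mu>3 > 0" and K3: "\<And>\<mu>. \<mu> \<ge> \<mu>3 \<Longrightarrow>
     minv (P2hat L M N QD A \<mu>) \<in> carrier_mat ?n ?n"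
    using asym_inv[OF Mpc Bpc BMp zero_carrier_mat] unfolding P2def[symmetric] by blast
  obtain av where av: "av > 0" "\<And>v. v\<in>carrier_vec ?n \<Longrightarrow> nv v \<le> av * vn v" using nv_upper[OF nv] by blast
  obtain k0 where k0: "k0 > 0" "\<And>v. v\<in>carrier_vec ?n \<Longrightarrow> k0 * vn v \<le> nv v" using nv_lower[OF nv] by blast
  obtain c \<mu>0 where sm: "\<And>k \<mu>. 1 \<le> k \<Longrightarrow> \<mu>0 \<le> \<mu> \<Longrightarrow>
           induced_norm nv ?n (Cmat L M N Q A \<mu> * (T2mat L M N Q QD A \<mu>) ^\<^sub>m k)
             \<le> c * sqrt (8 / (real k * pi)) * \<mu>" using a(28) by blast
  have TFCc: "TFC \<in> carrier_mat ?nt ?n" unfolding TFC_def mult.assoc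
    using a(22,23) by (intro kron_carrier one_carrier_mat cmc)
  have TCFc: "TCF \<in> carrier_mat ?n ?nt" unfolding TCF_def mult.assoc
    using a(24,25) by (intro kron_carrier one_carrier_mat cmc)
  define tf where "tf = mabs TFC"
  define tc where "tc = mabs TCF"
  define G where "G = \<bar>K1\<bar> + tc * \<bar>K2\<bar> * tf"
  have G0: "G \<ge> 0" using mabs_nonneg by (simp add: G_def tf_def tc_def)
  define cc where "cc = av * G * \<bar>c\<bar> * sqrt (8 / pi) / k0 + 1"
  have "0 \<le> av * G * \<bar>c\<bar> * sqrt (8 / pi) / k0"
    using av(1) k0(1) G0 by (intro divide_nonneg_pos mult_nonneg_nonneg) auto
  then have cc0: "cc > 0" by (simp add: cc_def)
  define \<mu>s where "\<mu>s = max 1 (max \<mu>0 (max \<mu>1 (max \<mu>2 \<mu>3)))"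
  have "\<forall>k::nat. \<forall>\<mu>::real. 1 \<le> k \<and> \<mu>s \<le> \<mu> \<longrightarrow>
           induced_norm nv ?n (Tpfasst L M N Mt Nt Q QD QDt A At TCF TFC \<mu> k) \<le> cc / sqrt (real k)"
  proof (intro allI impI, elim conjE)
    fix k :: nat and \<mu> :: real assume k1: "1 \<le> k" and mus: "\<mu>s \<le> \<mu>"
    have mupos: "\<mu> > 0" and m0: "\<mu>0 \<le> \<mu>" and m1: "\<mu>1 \<le> \<mu>" and m2: "\<mu>2 \<le> \<mu>" and m3: "\<mu>3 \<le> \<mu>"
      using mus by (auto simp: \<mu>s_def)
    define C where "C = Cmat L M N Q A \<mu>"
    define Ci where "Ci = minv C"
    define Pi where "Pi = minv (Ptilde L Mt Nt QDt At \<mu>)"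
    define T2 where "T2 = T2mat L M N Q QD A \<mu>"
    have Cc: "C \<in> carrier_mat ?n ?n" unfolding C_def Cdef using Mfc Rfc by (intro minus_carrier_mat) auto
    have Ci: "Ci \<in> carrier_mat ?n ?n" "Ci * C = 1\<^sub>m ?n"
      "\<And>w. w \<in> carrier_vec ?n \<Longrightarrow> vn (Ci *\<^sub>v w) \<le> K1 / \<mu> * vn w"
      using K1[OF m1] by (auto simp: Ci_def C_def)
    have Pi: "Pi \<in> carrier_mat ?nt ?nt" "\<And>w. w \<in> carrier_vec ?nt \<Longrightarrow> vn (Pi *\<^sub>v w) \<le> K2 / \<mu> * vn w"
      using K2[OF m2] by (auto simp: Pi_def)
    have T2c: "T2 \<in> carrier_mat ?n ?n"
      unfolding T2_def T2mat_def using K3[OF m3] Cc[unfolded C_def]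
      by (intro minus_carrier_mat mult_carrier_mat) auto
    define B where "B = C * T2 ^\<^sub>m k"
    have Bc: "B \<in> carrier_mat ?n ?n" using Cc T2c by (simp add: B_def)
    have Bn: "induced_norm nv ?n B \<le> \<bar>c\<bar> * sqrt (8 / (real k * pi)) * \<mu>"
    proof -
      have "induced_norm nv ?n B \<le> c * sqrt (8 / (real k * pi)) * \<mu>"
        using sm[OF k1 m0] by (simp add: B_def C_def T2_def)
      also have "\<dots> \<le> \<bar>c\<bar> * sqrt (8 / (real k * pi)) * \<mu>"
        using mupos by (intro mult_right_mono) auto
      finally show ?thesis .
    qed
    have sq: "sqrt (8 / (real k * pi)) = sqrt (8 / pi) / sqrt (real k)"
      by (simp add: real_sqrt_divide real_sqrt_mult)
    have Tdef: "Tpfasst L M N Mt Nt Q QD QDt A At TCF TFC \<mu> k = (1\<^sub>m ?n - TCF * Pi * TFC * C) * T2 ^\<^sub>m k"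
      by (simp add: Tpfasst_def Pi_def C_def T2_def)
    have main: "nv (Tpfasst L M N Mt Nt Q QD QDt A At TCF TFC \<mu> k *\<^sub>v v) \<le> cc / sqrt (real k) * nv v"
      if v: "v \<in> carrier_vec ?n" "v \<noteq> 0\<^sub>v ?n" for v
    proof -
      define z where "z = T2 ^\<^sub>m k *\<^sub>v v"
      have T2k: "T2 ^\<^sub>m k \<in> carrier_mat ?n ?n" using T2c by (rule pow_carrier_mat)
      have z: "z \<in> carrier_vec ?n" unfolding z_def using T2k v(1) by (rule mult_mat_vec_carrier)
      define u where "u = B *\<^sub>v v"
      have u: "u \<in> carrier_vec ?n" using Bc v by (simp add: u_def)
      have uz: "u = C *\<^sub>v z" unfolding u_def z_def B_def using Cc T2k v(1) by (rule assoc_mult_mat_vec)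
      have zu: "z = Ci *\<^sub>v u"
        using uz Ci Cc z assoc_mult_mat_vec[of Ci ?n ?n C ?n z] by simp
      have Y1: "TCF * Pi \<in> carrier_mat ?n ?nt" using mult_carrier_mat[OF TCFc Pi(1)] .
      have Y2: "TCF * Pi * TFC \<in> carrier_mat ?n ?n" using mult_carrier_mat[OF Y1 TFCc] .
      have Yc: "TCF * Pi * TFC * C \<in> carrier_mat ?n ?n" using mult_carrier_mat[OF Y2 Cc] .
      have "Tpfasst L M N Mt Nt Q QD QDt A At TCF TFC \<mu> k *\<^sub>v v = (1\<^sub>m ?n - TCF * Pi * TFC * C) *\<^sub>v z"
        unfolding Tdef z_def using Yc T2c v by (intro assoc_mult_mat_vec) auto
      also have "\<dots> = z - (TCF * Pi * TFC * C) *\<^sub>v z"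
        using Yc z by (subst minus_mult_distrib_mat_vec) auto
      also have "(TCF * Pi * TFC * C) *\<^sub>v z = TCF *\<^sub>v (Pi *\<^sub>v (TFC *\<^sub>v u))"
      proof -
        have u1: "TFC *\<^sub>v u \<in> carrier_vec ?nt" using TFCc u by simp
        show ?thesis
          unfolding assoc_mult_mat_vec[OF Y2 Cc z] uz[symmetric] assoc_mult_mat_vec[OF Y1 TFCc u]
            assoc_mult_mat_vec[OF TCFc Pi(1) u1] ..
      qed
      finally have Tv: "Tpfasst L M N Mt Nt Q QD QDt A At TCF TFC \<mu> k *\<^sub>v v = Ci *\<^sub>v u - TCF *\<^sub>v (Pi *\<^sub>v (TFC *\<^sub>v u))"
        using zu by simp
      have w1: "TFC *\<^sub>v u \<in> carrier_vec ?nt" "Pi *\<^sub>v (TFC *\<^sub>v u) \<in> carrier_vec ?nt" using TFCc Pi u by auto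
      have "vn (Ci *\<^sub>v u - TCF *\<^sub>v (Pi *\<^sub>v (TFC *\<^sub>v u))) \<le> vn (Ci *\<^sub>v u) + vn (TCF *\<^sub>v (Pi *\<^sub>v (TFC *\<^sub>v u)))"
        using Ci TCFc w1 u by (intro vn_minus) simp
      also have "vn (Ci *\<^sub>v u) \<le> \<bar>K1\<bar> / \<mu> * vn u"
        using Ci(3)[OF u] mupos vn_nonneg[of u] by (smt (verit) divide_right_mono mult_right_mono abs_ge_self)
      also have "vn (TCF *\<^sub>v (Pi *\<^sub>v (TFC *\<^sub>v u))) \<le> tc * (\<bar>K2\<bar> / \<mu> * (tf * vn u))"
      proof -
        have e1: "vn (TCF *\<^sub>v (Pi *\<^sub>v (TFC *\<^sub>v u))) \<le> tc * vn (Pi *\<^sub>v (TFC *\<^sub>v u))"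
          unfolding tc_def by (rule vn_mult[OF TCFc w1(2)])
        have e2: "vn (Pi *\<^sub>v (TFC *\<^sub>v u)) \<le> \<bar>K2\<bar> / \<mu> * vn (TFC *\<^sub>v u)"
          using Pi(2)[OF w1(1)] mupos vn_nonneg[of "TFC *\<^sub>v u"]
          by (smt (verit) divide_right_mono mult_right_mono abs_ge_self)
        have e3: "vn (TFC *\<^sub>v u) \<le> tf * vn u" unfolding tf_def by (rule vn_mult[OF TFCc u])
        have tc0: "0 \<le> tc" by (simp add: tc_def mabs_nonneg)
        have k20: "0 \<le> \<bar>K2\<bar> / \<mu>" using mupos by simp
        have "\<bar>K2\<bar> / \<mu> * vn (TFC *\<^sub>v u) \<le> \<bar>K2\<bar> / \<mu> * (tf * vn u)" using e3 k20 by (rule mult_left_mono)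
        with e2 have "vn (Pi *\<^sub>v (TFC *\<^sub>v u)) \<le> \<bar>K2\<bar> / \<mu> * (tf * vn u)" by linarith
        then have "tc * vn (Pi *\<^sub>v (TFC *\<^sub>v u)) \<le> tc * (\<bar>K2\<bar> / \<mu> * (tf * vn u))" using tc0 by (rule mult_left_mono)
        with e1 show ?thesis by linarith
      qed
      finally have "vn (Ci *\<^sub>v u - TCF *\<^sub>v (Pi *\<^sub>v (TFC *\<^sub>v u))) \<le> \<bar>K1\<bar> / \<mu> * vn u + tc * (\<bar>K2\<bar> / \<mu> * (tf * vn u))"
        by simp
      also have "\<dots> = G / \<mu> * vn u" by (simp add: G_def field_simps add_divide_distrib)
      finally have vT: "vn (Tpfasst L M N Mt Nt Q QD QDt A At TCF TFC \<mu> k *\<^sub>v v) \<le> G / \<mu> * vn u"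
        using Tv by simp
      have Tvc: "Tpfasst L M N Mt Nt Q QD QDt A At TCF TFC \<mu> k *\<^sub>v v \<in> carrier_vec ?n"
        unfolding Tv using Ci(1) u TCFc w1 by simp
      have "nv (Tpfasst L M N Mt Nt Q QD QDt A At TCF TFC \<mu> k *\<^sub>v v) \<le> av * (G / \<mu> * vn u)"
        using av(2)[OF Tvc] vT av(1) by (smt (verit) mult_left_mono)
      also have "vn u \<le> nv u / k0" using k0 u by (simp add: field_simps)
      also have "nv u \<le> induced_norm nv ?n B * nv v" unfolding u_def by (rule induced_bound[OF nv Bc v(1)])
      also have "\<dots> \<le> \<bar>c\<bar> * sqrt (8 / (real k * pi)) * \<mu> * nv v"
        using Bn nvD(1)[OF nv v(1)] by (rule mult_right_mono)
      finally have "nv (Tpfasst L M N Mt Nt Q QD QDt A At TCF TFC \<mu> k *\<^sub>v v)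
          \<le> av * (G / \<mu> * (\<bar>c\<bar> * sqrt (8 / (real k * pi)) * \<mu> * nv v / k0))"
        using av(1) G0 mupos k0(1) by (simp add: mult_left_mono divide_right_mono)
      also have "\<dots> = (av * G * \<bar>c\<bar> * sqrt (8 / pi) / k0) / sqrt (real k) * nv v"
        using mupos k0(1) unfolding sq by (simp add: field_simps)
      also have "\<dots> \<le> cc / sqrt (real k) * nv v"
        using nvD(1)[OF nv v(1)] k1 by (intro mult_right_mono divide_right_mono) (auto simp: cc_def)
      finally show ?thesis .
    qed
    show "induced_norm nv ?n (Tpfasst L M N Mt Nt Q QD QDt A At TCF TFC \<mu> k) \<le> cc / sqrt (real k)"
      by (rule induced_le[OF nv n0 main])
  qed
  moreover have "\<mu>s > 0" by (simp add: \<mu>s_def)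
  ultimately show ?thesis using cc0 by blast
qed

end
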